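(* For every bipartite graph $G$, $\mathbf{tw}(G)\le 6\,\mathbf{mimw}(G')$, where $G'$ is defined below.
   Context: For $G=(V,E)$, $G'$ has vertices $x_v,y_v$ for each $v\in V$ and $p_{e,u},q_{e,u},p_{e,v},q_{e,v}$ for each edge $e=uv\in E$; its edges are $x_vy_u$ for all $u,v\in V$, and for each $e=uv\in E$ the edges $p_{e,u}q_{e,u}$, $p_{e,v}q_{e,v}$, $x_up_{e,u}$, $y_vq_{e,u}$, $x_vp_{e,v}$, $y_uq_{e,v}$. $\mathbf{tw}$ is treewidth. A branch decomposition $(T,\delta)$ of a graph $H$ is a tree with maximum degree $3$ and a bijection from its leaves to $V(H)$; each node of $T$ (rooted) yields a cut $(A,\bar A)$ with $A$ the labels of leaves below it. $\mathbf{mimw}(H)$ is the minimum over branch decompositions of the maximum over their cuts of the size of a maximum induced matching in $H[A,\bar A]$ (vertex set $V(H)$, edges of $H$ between $A$ and $\bar A$). *)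

theory Defs
  imports Main
begin

definition graph :: "'a set \<Rightarrow> 'a set set \<Rightarrow> bool" where
  "graph V E \<longleftrightarrow> finite V \<and>
     (\<forall>e\<in>E. \<exists>u v. e = {u, v} \<and> u \<in> V \<and> v \<in> V \<and> u \<noteq> v)"

definition bipartite :: "'a set \<Rightarrow> 'a set set \<Rightarrow> bool" where
  "bipartite V E \<longleftrightarrow> (\<exists>X. X \<subseteq> V \<and>
     (\<forall>e\<in>E. \<exists>u v. e = {u, v} \<and> u \<in> X \<and> v \<in> V - X))"

definition walk :: "'a set \<Rightarrow> 'a set set \<Rightarrow> 'a list \<Rightarrow> bool" where
  "walk V E xs \<longleftrightarrow> xs \<noteq> [] \<and> set xs \<subseteq> V \<and>
     (\<forall>i. Suc i < length xs \<longrightarrow> {xs ! i, xs ! Suc i} \<in> E)"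

definition connected_graph :: "'a set \<Rightarrow> 'a set set \<Rightarrow> bool" where
  "connected_graph V E \<longleftrightarrow>
     (\<forall>a\<in>V. \<forall>b\<in>V. \<exists>xs. walk V E xs \<and> hd xs = a \<and> last xs = b)"

definition has_cycle :: "'a set \<Rightarrow> 'a set set \<Rightarrow> bool" where
  "has_cycle V E \<longleftrightarrow> (\<exists>xs. walk V E xs \<and> distinct xs \<and> length xs \<ge> 3 \<and>
     {last xs, hd xs} \<in> E)"

definition tree :: "'b set \<Rightarrow> 'b set set \<Rightarrow> bool" where
  "tree N F \<longleftrightarrow> graph N F \<and> N \<noteq> {} \<and> connected_graph N F \<and> \<not> has_cycle N F"

definition degree :: "'b set set \<Rightarrow> 'b \<Rightarrow> nat" where
  "degree F t = card {e \<in> F. t \<in> e}"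

definition tree_decomposition ::
  "'a set \<Rightarrow> 'a set set \<Rightarrow> nat set \<Rightarrow> nat set set \<Rightarrow> (nat \<Rightarrow> 'a set) \<Rightarrow> bool" where
  "tree_decomposition V E N F \<beta> \<longleftrightarrow> tree N F \<and>
     (\<forall>t\<in>N. \<beta> t \<subseteq> V) \<and>
     (\<forall>v\<in>V. \<exists>t\<in>N. v \<in> \<beta> t) \<and>
     (\<forall>e\<in>E. \<exists>t\<in>N. e \<subseteq> \<beta> t) \<and>
     (\<forall>v\<in>V. connected_graph {t \<in> N. v \<in> \<beta> t} {f \<in> F. \<forall>t\<in>f. v \<in> \<beta> t})"

definition td_width :: "nat set \<Rightarrow> (nat \<Rightarrow> 'a set) \<Rightarrow> nat" where
  "td_width N \<beta> = Max ((\<lambda>t. card (\<beta> t)) ` N) - 1"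

definition treewidth :: "'a set \<Rightarrow> 'a set set \<Rightarrow> nat" where
  "treewidth V E = Inf {w. \<exists>N F \<beta>. tree_decomposition V E N F \<beta> \<and> w = td_width N \<beta>}"

definition cut_edges :: "'a set \<Rightarrow> 'a set set \<Rightarrow> 'a set \<Rightarrow> 'a set set" where
  "cut_edges V E A = {e \<in> E. \<exists>u v. e = {u, v} \<and> u \<in> A \<and> v \<in> V - A}"

definition induced_matching_cut :: "'a set \<Rightarrow> 'a set set \<Rightarrow> 'a set \<Rightarrow> 'a set set \<Rightarrow> bool" where
  "induced_matching_cut V E A M \<longleftrightarrow> M \<subseteq> cut_edges V E A \<and>
     (\<forall>e\<in>M. \<forall>f\<in>M. e \<noteq> f \<longrightarrow> e \<inter> f = {} \<and>
        \<not> (\<exists>g\<in>cut_edges V E A. g \<inter> e \<noteq> {} \<and> g \<inter> f \<noteq> {}))"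

definition mim :: "'a set \<Rightarrow> 'a set set \<Rightarrow> 'a set \<Rightarrow> nat" where
  "mim V E A = Max (card ` {M. induced_matching_cut V E A M})"

definition leaves :: "nat set \<Rightarrow> nat set set \<Rightarrow> nat set" where
  "leaves N F = {t \<in> N. degree F t \<le> 1}"

definition branch_decomposition ::
  "'a set \<Rightarrow> 'a set set \<Rightarrow> nat set \<Rightarrow> nat set set \<Rightarrow> (nat \<Rightarrow> 'a) \<Rightarrow> bool" where
  "branch_decomposition V E N F \<delta> \<longleftrightarrow> tree N F \<and> (\<forall>t\<in>N. degree F t \<le> 3) \<and>
     bij_betw \<delta> (leaves N F) V"

text \<open>With root r, leaf l lies below node t iff every path from r to l
passes through t, i.e. there is no walk from r to l avoiding t.\<close>
definition leaves_below :: "nat set \<Rightarrow> nat set set \<Rightarrow> nat \<Rightarrow> nat \<Rightarrow> nat set" where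
  "leaves_below N F r t = {l \<in> leaves N F.
     \<not> (\<exists>xs. walk N F xs \<and> hd xs = r \<and> last xs = l \<and> t \<notin> set xs)}"

definition bd_mimw :: "'a set \<Rightarrow> 'a set set \<Rightarrow> nat set \<Rightarrow> nat set set \<Rightarrow> (nat \<Rightarrow> 'a) \<Rightarrow> nat \<Rightarrow> nat" where
  "bd_mimw V E N F \<delta> r = Max ((\<lambda>t. mim V E (\<delta> ` leaves_below N F r t)) ` N)"

definition mimw :: "'a set \<Rightarrow> 'a set set \<Rightarrow> nat" where
  "mimw V E = Inf {k. \<exists>N F \<delta> r. branch_decomposition V E N F \<delta> \<and> r \<in> N \<and>
                        k = bd_mimw V E N F \<delta> r}"

datatype 'a gvert = Xv 'a | Yv 'a | Pv "'a set" 'a | Qv "'a set" 'a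

definition G'_V :: "'a set \<Rightarrow> 'a set set \<Rightarrow> 'a gvert set" where
  "G'_V V E = Xv ` V \<union> Yv ` V \<union> {Pv e u | e u. e \<in> E \<and> u \<in> e} \<union> {Qv e u | e u. e \<in> E \<and> u \<in> e}"

definition G'_E :: "'a set \<Rightarrow> 'a set set \<Rightarrow> 'a gvert set set" where
  "G'_E V E = {{Xv v, Yv u} | u v. u \<in> V \<and> v \<in> V} \<union>
     {{Pv e u, Qv e u} | e u. e \<in> E \<and> u \<in> e} \<union>
     {{Xv u, Pv e u} | e u. e \<in> E \<and> u \<in> e} \<union>
     {{Yv w, Qv e u} | e u w. e \<in> E \<and> e = {u, w} \<and> u \<noteq> w}"

end

theory Submission
  imports Defs
begin


lemma walk_single[simp]: "walk N F [x] \<longleftrightarrow> x \<in> N"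
  by (auto simp: walk_def)

lemma walk_Cons2: "walk N F (x # y # xs) \<longleftrightarrow> x \<in> N \<and> {x, y} \<in> F \<and> walk N F (y # xs)"
proof
  assume w: "walk N F (x # y # xs)"
  have "{x,y} \<in> F" using w unfolding walk_def by (metis Suc_less_eq length_Cons nth_Cons_0 nth_Cons_Suc zero_less_Suc)
  moreover have "walk N F (y # xs)" using w unfolding walk_def
  proof (intro conjI allI impI)
    fix i assume "Suc i < length (y # xs)"
    then have "Suc (Suc i) < length (x # y # xs)" by simp
    then show "{(y # xs) ! i, (y # xs) ! Suc i} \<in> F" using w unfolding walk_def by auto
  qed auto
  ultimately show "x \<in> N \<and> {x, y} \<in> F \<and> walk N F (y # xs)" using w by (auto simp: walk_def)
next
  assume h: "x \<in> N \<and> {x, y} \<in> F \<and> walk N F (y # xs)"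
  show "walk N F (x # y # xs)" unfolding walk_def
  proof (intro conjI allI impI)
    show "set (x # y # xs) \<subseteq> N" using h by (auto simp: walk_def)
    fix i assume "Suc i < length (x # y # xs)"
    then show "{(x # y # xs) ! i, (x # y # xs) ! Suc i} \<in> F"
      using h by (cases i) (auto simp: walk_def)
  qed simp
qed

lemma walk_Cons: "walk N F (x # xs) \<longleftrightarrow> x \<in> N \<and> (xs = [] \<or> ({x, hd xs} \<in> F \<and> walk N F xs))"
  by (cases xs) (auto simp: walk_Cons2)

lemma walk_nonempty: "walk N F xs \<Longrightarrow> xs \<noteq> []" by (simp add: walk_def)

lemma walk_set: "walk N F xs \<Longrightarrow> set xs \<subseteq> N" by (simp add: walk_def)

lemma walk_append: "xs \<noteq> [] \<Longrightarrow> ys \<noteq> [] \<Longrightarrow>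
   walk N F (xs @ ys) \<longleftrightarrow> walk N F xs \<and> walk N F ys \<and> {last xs, hd ys} \<in> F"
proof (induction xs)
  case Nil then show ?case by simp
next
  case (Cons a xs)
  show ?case
  proof (cases "xs = []")
    case True then show ?thesis using Cons.prems by (cases ys) (auto simp: walk_Cons2)
  next
    case False
    then obtain b xs' where xs: "xs = b # xs'" by (cases xs) auto
    have "walk N F ((a # xs) @ ys) = (a \<in> N \<and> {a,b} \<in> F \<and> walk N F (xs @ ys))"
      using xs by (simp add: walk_Cons2)
    also have "\<dots> = (a \<in> N \<and> {a,b} \<in> F \<and> walk N F xs \<and> walk N F ys \<and> {last xs, hd ys} \<in> F)"
      using Cons False by simp
    finally show ?thesis using xs by (auto simp: walk_Cons2)
  qed
qed

lemma walk_rev: "walk N F xs \<Longrightarrow> walk N F (rev xs)"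
proof (induction xs rule: induct_list012)
  case 1 then show ?case by (simp add: walk_def)
next
  case (2 x) then show ?case by simp
next
  case (3 x y zs)
  have "walk N F (rev (y # zs) @ [x])"
    using 3 by (subst walk_append) (auto simp: walk_Cons2 insert_commute)
  then show ?case by simp
qed

lemma walk_rev_iff: "walk N F (rev xs) = walk N F xs"
  using walk_rev by fastforce

lemma walk_join: "walk N F xs \<Longrightarrow> walk N F ys \<Longrightarrow> last xs = hd ys \<Longrightarrow> walk N F (xs @ tl ys)"
proof -
  assume a: "walk N F xs" "walk N F ys" "last xs = hd ys"
  show ?thesis
  proof (cases "tl ys = []")
    case True then show ?thesis using a by simp
  next
    case False
    then obtain y z zs where ys: "ys = y # z # zs" using a by (cases ys; cases "tl ys") auto
    show ?thesis using a ys walk_nonempty[OF a(1)] by (subst walk_append) (auto simp: walk_Cons2)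
  qed
qed

lemma walk_join_hd_last:
  assumes "walk N F xs" "walk N F ys" "last xs = hd ys"
  shows "hd (xs @ tl ys) = hd xs" "last (xs @ tl ys) = last ys" "set (xs @ tl ys) = set xs \<union> set ys"
proof -
  have ne: "xs \<noteq> []" "ys \<noteq> []" using assms walk_nonempty by auto
  show "hd (xs @ tl ys) = hd xs" using ne by simp
  show "last (xs @ tl ys) = last ys" using ne assms(3) by (cases ys) (auto simp: last_append)
  show "set (xs @ tl ys) = set xs \<union> set ys"
  proof (cases ys)
    case (Cons a l)
    then have "a \<in> set xs" using ne assms(3) by (metis last_in_set list.sel(1))
    then show ?thesis using Cons by auto
  qed (use ne in simp)
qed

lemma walk_shorten:
  assumes "walk N F xs"
  shows "\<exists>ys. walk N F ys \<and> distinct ys \<and> hd ys = hd xs \<and> last ys = last xs \<and> set ys \<subseteq> set xs"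
  using assms
proof (induction "length xs" arbitrary: xs rule: less_induct)
  case less
  show ?case
  proof (cases "distinct xs")
    case True then show ?thesis using less.prems by blast
  next
    case False
    then obtain as y bs cs where xs: "xs = as @ [y] @ bs @ [y] @ cs"
      using not_distinct_decomp by blast
    let ?zs = "as @ [y] @ cs"
    have w1: "walk N F (as @ [y])" and w2: "walk N F ([y] @ cs)"
    proof -
      have "walk N F ((as @ [y] @ bs) @ ([y] @ cs))" using less.prems xs by simp
      then have "walk N F (as @ [y] @ bs)" "walk N F ([y] @ cs)"
        by (subst (asm) walk_append; auto)+
      moreover have "walk N F ((as @ [y]) @ bs) \<Longrightarrow> walk N F (as @ [y])"
        by (cases "bs = []") (simp, subst (asm) walk_append, auto)
      ultimately show "walk N F (as @ [y])" "walk N F ([y] @ cs)" by auto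
    qed
    have wz: "walk N F ?zs"
      using walk_join[OF w1 w2] by simp
    have "length ?zs < length xs" using xs by simp
    then obtain ys where "walk N F ys \<and> distinct ys \<and> hd ys = hd ?zs \<and> last ys = last ?zs \<and> set ys \<subseteq> set ?zs"
      using less.hyps wz by blast
    moreover have "hd ?zs = hd xs" using xs by (cases as) auto
    moreover have "last ?zs = last xs" using xs by (cases cs) auto
    moreover have "set ?zs \<subseteq> set xs" using xs by auto
    ultimately show ?thesis by (metis order_trans)
  qed
qed



lemma walk_prefix: "walk N F (xs @ ys) \<Longrightarrow> xs \<noteq> [] \<Longrightarrow> walk N F xs"
  by (cases "ys = []") (simp, subst (asm) walk_append, auto)

lemma walk_suffix: "walk N F (xs @ ys) \<Longrightarrow> ys \<noteq> [] \<Longrightarrow> walk N F ys"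
  by (cases "xs = []") (simp, subst (asm) walk_append, auto)

lemma walk_edge_mid: "walk N F (xs @ ys) \<Longrightarrow> xs \<noteq> [] \<Longrightarrow> ys \<noteq> [] \<Longrightarrow> {last xs, hd ys} \<in> F"
  by (subst (asm) walk_append, auto)

lemma path_unique:
  assumes "\<not> has_cycle N F"
  shows "walk N F P \<Longrightarrow> walk N F Q \<Longrightarrow> distinct P \<Longrightarrow> distinct Q \<Longrightarrow> hd P = hd Q \<Longrightarrow> last P = last Q \<Longrightarrow> P = Q"
proof (induction P arbitrary: Q)
  case Nil then show ?case by (simp add: walk_def)
next
  case (Cons a P')
  obtain Q' where Q: "Q = a # Q'" using Cons.prems walk_nonempty by (cases Q) auto
  show ?case
  proof (cases "P' = [] \<or> Q' = []")
    case True
    then show ?thesis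
    proof
      assume "P' = []"
      then have "last Q = a" using Cons.prems by simp
      then show ?thesis using Q Cons.prems \<open>P' = []\<close> by (cases Q') (auto, metis last_in_set list.distinct(1))
    next
      assume "Q' = []"
      then have "last (a # P') = a" using Cons.prems Q by simp
      then show ?thesis using Q Cons.prems \<open>Q' = []\<close> by (cases P') (auto, metis last_in_set list.distinct(1))
    qed
  next
    case False
    then have ne: "P' \<noteq> []" "Q' \<noteq> []" by auto
    have wP': "walk N F P'" using Cons.prems(1) ne walk_suffix[of N F "[a]" P'] by simp
    have wQ': "walk N F Q'" using Cons.prems(2) ne walk_suffix[of N F "[a]" Q'] Q by simp
    have lastPQ: "last P' = last Q'" using Cons.prems Q ne by simp
    show ?thesis
    proof (cases "hd P' = hd Q'")
      case True
      then have "P' = Q'" using Cons.IH[OF wP' wQ'] Cons.prems Q lastPQ by simp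
      then show ?thesis using Q by simp
    next
      case hne: False
      have "\<exists>x\<in>set P'. x \<in> set Q'" using ne lastPQ by (metis last_in_set)
      then obtain pre c post where P'eq: "P' = pre @ c # post" and cQ: "c \<in> set Q'"
        and pre: "\<forall>y\<in>set pre. y \<notin> set Q'"
        using split_list_first_prop[of P' "\<lambda>x. x \<in> set Q'"] by blast
      obtain qpre qpost where Q'eq: "Q' = qpre @ c # qpost" using cQ split_list by metis
      define cyc where "cyc = a # pre @ [c] @ rev qpre"
      have wP: "walk N F ((a # pre @ [c]) @ post)" using Cons.prems(1) P'eq by simp
      have w1: "walk N F (a # pre @ [c])" using walk_prefix[OF wP] by simp
      have wQ: "walk N F ((a # qpre @ [c]) @ qpost)" using Cons.prems(2) Q Q'eq by simp
      have w2: "walk N F (a # qpre @ [c])" using walk_prefix[OF wQ] by simp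
      have dP: "distinct (a # pre @ [c])" using Cons.prems(3) P'eq by simp
      have dQ: "distinct (a # qpre @ [c])" using Cons.prems(4) Q Q'eq by simp
      have wc: "walk N F cyc"
      proof (cases "qpre = []")
        case True then show ?thesis using w1 by (simp add: cyc_def)
      next
        case False
        have w3: "walk N F (qpre @ [c])" using walk_suffix[of N F "[a]" "qpre @ [c]"] w2 by simp
        have "walk N F (rev (qpre @ [c]))" using walk_rev[OF w3] .
        then have w4: "walk N F (c # rev qpre)" by simp
        have "walk N F ((a # pre @ [c]) @ tl (c # rev qpre))"
          using walk_join[OF w1 w4] by simp
        then show ?thesis by (simp add: cyc_def)
      qed
      have dc: "distinct cyc" using dP dQ pre Q'eq unfolding cyc_def by auto
      have q1: "hd Q' \<in> set cyc" using Q'eq by (cases qpre) (auto simp: cyc_def)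
      have p1: "hd P' \<in> set cyc" using P'eq by (cases pre) (auto simp: cyc_def)
      have "a \<noteq> hd P'" using Cons.prems(3) ne by (metis distinct.simps(2) hd_in_set)
      moreover have "a \<noteq> hd Q'" using Cons.prems(4) Q ne by (metis distinct.simps(2) hd_in_set)
      ultimately have "card {a, hd P', hd Q'} = 3" using hne by simp
      moreover have "{a, hd P', hd Q'} \<subseteq> set cyc" using q1 p1 by (simp add: cyc_def)
      ultimately have "3 \<le> card (set cyc)" by (metis List.finite_set card_mono)
      then have len: "3 \<le> length cyc" using distinct_card[OF dc] by simp
      have lastc: "last cyc = hd Q'"
        using Q'eq by (cases qpre) (auto simp: cyc_def)
      have "{a, hd Q'} \<in> F" using Cons.prems(2) Q ne by (cases Q') (auto simp: walk_Cons2)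
      then have "{last cyc, hd cyc} \<in> F" using lastc by (simp add: cyc_def insert_commute)
      then have "has_cycle N F" using wc dc len unfolding has_cycle_def by blast
      then show ?thesis using assms by simp
    qed
  qed
qed

lemma path_sub_walk:
  assumes "\<not> has_cycle N F" "walk N F P" "distinct P" "walk N F W" "hd W = hd P" "last W = last P"
  shows "set P \<subseteq> set W"
proof -
  obtain Z where Z: "walk N F Z" "distinct Z" "hd Z = hd W" "last Z = last W" "set Z \<subseteq> set W"
    using walk_shorten[OF assms(4)] by blast
  have "Z = P" using path_unique[OF assms(1) Z(1) assms(2) Z(2) assms(3)] Z assms by simp
  then show ?thesis using Z by simp
qed



definition sep :: "nat set \<Rightarrow> nat set set \<Rightarrow> nat \<Rightarrow> nat \<Rightarrow> nat \<Rightarrow> bool" where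
  "sep N F a b t \<longleftrightarrow> (\<forall>xs. walk N F xs \<and> hd xs = a \<and> last xs = b \<longrightarrow> t \<in> set xs)"

definition St :: "nat set \<Rightarrow> nat set set \<Rightarrow> nat set \<Rightarrow> nat set" where
  "St N F L = {t \<in> N. \<exists>a\<in>L. \<exists>b\<in>L. sep N F a b t}"

definition ch :: "nat set \<Rightarrow> nat set set \<Rightarrow> nat \<Rightarrow> nat \<Rightarrow> nat set" where
  "ch N F r t = {c \<in> N. {t, c} \<in> F \<and> sep N F r c t}"

lemma leaves_below_sep: "leaves_below N F r t = {l \<in> leaves N F. sep N F r l t}"
  unfolding leaves_below_def sep_def by blast

lemma sep_end1: "sep N F a b a" unfolding sep_def by (metis hd_in_set walk_nonempty)
lemma sep_end2: "sep N F a b b" unfolding sep_def by (metis last_in_set walk_nonempty)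

lemma walk_restrict: "walk N F xs \<Longrightarrow> set xs \<subseteq> S \<Longrightarrow> walk S {f \<in> F. \<forall>t\<in>f. t \<in> S} xs"
  unfolding walk_def
proof (intro conjI allI impI)
  fix i assume a: "xs \<noteq> [] \<and> set xs \<subseteq> N \<and> (\<forall>i. Suc i < length xs \<longrightarrow> {xs ! i, xs ! Suc i} \<in> F)"
    "set xs \<subseteq> S" "Suc i < length xs"
  then have "xs ! i \<in> set xs" "xs ! Suc i \<in> set xs" by (simp_all add: nth_mem)
  then have "xs ! i \<in> S" "xs ! Suc i \<in> S" using a(2) by auto
  then show "{xs ! i, xs ! Suc i} \<in> {f \<in> F. \<forall>t\<in>f. t \<in> S}" using a by auto
qed auto

lemma tree_path:
  assumes "tree N F" "a \<in> N" "b \<in> N"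
  shows "\<exists>P. walk N F P \<and> distinct P \<and> hd P = a \<and> last P = b"
proof -
  obtain xs where "walk N F xs" "hd xs = a" "last xs = b"
    using assms unfolding tree_def connected_graph_def by blast
  then show ?thesis using walk_shorten by metis
qed

lemma tree_nocyc: "tree N F \<Longrightarrow> \<not> has_cycle N F" by (simp add: tree_def)

lemma tree_edge: "tree N F \<Longrightarrow> e \<in> F \<Longrightarrow> \<exists>u v. e = {u, v} \<and> u \<in> N \<and> v \<in> N \<and> u \<noteq> v"
  by (auto simp: tree_def graph_def)

lemma tree_finite: "tree N F \<Longrightarrow> finite N" by (simp add: tree_def graph_def)

lemma tree_finiteF: assumes "tree N F" shows "finite F"
proof -
  have "F \<subseteq> Pow N" using tree_edge[OF assms] by blast
  then show ?thesis using tree_finite[OF assms] by (meson finite_Pow_iff finite_subset)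
qed

lemma St_path:
  assumes T: "tree N F" and L: "L \<subseteq> N" and ab: "a \<in> L" "b \<in> L" and t: "t \<in> N" "sep N F a b t"
  shows "\<exists>P. walk N F P \<and> set P \<subseteq> St N F L \<and> hd P = a \<and> last P = t"
proof -
  obtain P where P: "walk N F P" "distinct P" "hd P = a" "last P = t"
    using tree_path[OF T] L ab t by blast
  have "set P \<subseteq> St N F L"
  proof
    fix s assume s: "s \<in> set P"
    have "sep N F a b s" unfolding sep_def
    proof (intro allI impI)
      fix W assume W: "walk N F W \<and> hd W = a \<and> last W = b"
      then have "t \<in> set W" using t unfolding sep_def by blast
      then obtain W1 W2 where Weq: "W = W1 @ t # W2" by (metis split_list)
      have wW1: "walk N F (W1 @ [t])" using walk_prefix[of N F "W1 @ [t]" W2] W Weq by simp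
      have "hd (W1 @ [t]) = hd P" using W Weq P by (cases W1) auto
      moreover have "last (W1 @ [t]) = last P" using P by simp
      ultimately have "set P \<subseteq> set (W1 @ [t])"
        using path_sub_walk[OF tree_nocyc[OF T] P(1) P(2) wW1] by simp
      then show "s \<in> set W" using s Weq by auto
    qed
    moreover have "s \<in> N" using s P walk_set by blast
    ultimately show "s \<in> St N F L" using ab unfolding St_def by blast
  qed
  then show ?thesis using P by blast
qed

lemma St_connected:
  assumes T: "tree N F" and L: "L \<subseteq> N"
  shows "connected_graph (St N F L) {f \<in> F. \<forall>t\<in>f. t \<in> St N F L}"
  unfolding connected_graph_def
proof (intro ballI)
  let ?S = "St N F L" let ?F = "{f \<in> F. \<forall>t\<in>f. t \<in> St N F L}"
  fix t1 t2 assume t1: "t1 \<in> ?S" and t2: "t2 \<in> ?S"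
  obtain a1 b1 where ab1: "a1 \<in> L" "b1 \<in> L" "sep N F a1 b1 t1" "t1 \<in> N" using t1 unfolding St_def by blast
  obtain a2 b2 where ab2: "a2 \<in> L" "b2 \<in> L" "sep N F a2 b2 t2" "t2 \<in> N" using t2 unfolding St_def by blast
  obtain P1 where P1: "walk N F P1" "set P1 \<subseteq> ?S" "hd P1 = a1" "last P1 = t1"
    using St_path[OF T L ab1(1,2) ab1(4,3)] by blast
  obtain P2 where P2: "walk N F P2" "set P2 \<subseteq> ?S" "hd P2 = a2" "last P2 = t2"
    using St_path[OF T L ab2(1,2) ab2(4,3)] by blast
  obtain P3 where P3: "walk N F P3" "set P3 \<subseteq> ?S" "hd P3 = a1" "last P3 = a2"
    using St_path[OF T L ab1(1) ab2(1) _ sep_end2] L ab2(1) by blast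
  have w1: "walk ?S ?F (rev P1)" using walk_restrict[OF walk_rev[OF P1(1)]] P1(2) by simp
  have w2: "walk ?S ?F P2" using walk_restrict[OF P2(1)] P2(2) by simp
  have w3: "walk ?S ?F P3" using walk_restrict[OF P3(1)] P3(2) by simp
  have ne: "P1 \<noteq> []" using P1 walk_nonempty by blast
  have j1: "last (rev P1) = hd P3" using P1 P3 ne by (simp add: last_rev)
  have w13: "walk ?S ?F (rev P1 @ tl P3)" using walk_join[OF w1 w3 j1] .
  have h13: "hd (rev P1 @ tl P3) = t1" "last (rev P1 @ tl P3) = a2"
    using walk_join_hd_last[OF w1 w3 j1] P1 P3 ne by (simp_all add: hd_rev)
  have j2: "last (rev P1 @ tl P3) = hd P2" using h13 P2 by simp
  have "walk ?S ?F ((rev P1 @ tl P3) @ tl P2)" using walk_join[OF w13 w2 j2] .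
  moreover have "hd ((rev P1 @ tl P3) @ tl P2) = t1" "last ((rev P1 @ tl P3) @ tl P2) = t2"
    using walk_join_hd_last[OF w13 w2 j2] h13 P2 by simp_all
  ultimately show "\<exists>xs. walk ?S ?F xs \<and> hd xs = t1 \<and> last xs = t2" by blast
qed



definition nb :: "nat set set \<Rightarrow> nat \<Rightarrow> nat set" where
  "nb F t = {c. {t, c} \<in> F}"

lemma nb_degree:
  assumes T: "tree N F"
  shows "finite (nb F t) \<and> card (nb F t) = degree F t"
proof -
  have bij: "bij_betw (\<lambda>c. {t, c}) (nb F t) {e \<in> F. t \<in> e}"
  proof (rule bij_betwI')
    fix x y assume "x \<in> nb F t" "y \<in> nb F t"
    show "({t, x} = {t, y}) = (x = y)" by (auto simp: doubleton_eq_iff)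
  next
    fix x assume "x \<in> nb F t" then show "{t, x} \<in> {e \<in> F. t \<in> e}" by (simp add: nb_def)
  next
    fix e assume e: "e \<in> {e \<in> F. t \<in> e}"
    then obtain u v where "e = {u, v}" using tree_edge[OF T] by blast
    then show "\<exists>x\<in>nb F t. e = {t, x}" using e by (auto simp: nb_def insert_commute)
  qed
  have "finite {e \<in> F. t \<in> e}" using tree_finiteF[OF T] by simp
  then show ?thesis using bij bij_betw_finite bij_betw_same_card unfolding degree_def by blast
qed

lemma two_nb:
  assumes T: "tree N F" and "c1 \<in> nb F t" "c2 \<in> nb F t" "c1 \<noteq> c2"
  shows "2 \<le> degree F t"
proof -
  have "card {c1, c2} \<le> card (nb F t)" using nb_degree[OF T] assms by (intro card_mono) auto
  then show ?thesis using nb_degree[OF T] assms by simp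
qed

lemma ch_sub_nb: "ch N F r t \<subseteq> nb F t" by (auto simp: ch_def nb_def)

lemma parent_exists:
  assumes T: "tree N F" and r: "r \<in> N" and t: "t \<in> N" "t \<noteq> r"
  shows "\<exists>p \<in> nb F t. p \<notin> ch N F r t"
proof -
  obtain R where R: "walk N F R" "distinct R" "hd R = r" "last R = t" using tree_path[OF T r t(1)] by blast
  obtain R' where R': "R = R' @ [t]" using R walk_nonempty by (metis append_butlast_last_id)
  have ne: "R' \<noteq> []" using R' R t by auto
  have e: "{last R', t} \<in> F" using walk_edge_mid[of N F R' "[t]"] R R' ne by simp
  have w: "walk N F R'" using walk_prefix[of N F R' "[t]"] R R' ne by simp
  have "t \<notin> set R'" using R R' by simp
  moreover have "hd R' = r" using R R' ne by simp
  ultimately have "\<not> sep N F r (last R') t" using w unfolding sep_def by blast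
  then show ?thesis using e unfolding nb_def ch_def by (auto simp: insert_commute)
qed

lemma ch_card:
  assumes T: "tree N F" and r: "r \<in> N" and t: "t \<in> N"
  shows "card (ch N F r t) + (if t = r then 0 else 1) \<le> degree F t"
proof -
  have fin: "finite (nb F t)" and cd: "card (nb F t) = degree F t" using nb_degree[OF T] by auto
  show ?thesis
  proof (cases "t = r")
    case True then show ?thesis using card_mono[OF fin ch_sub_nb] cd by simp
  next
    case False
    then obtain p where p: "p \<in> nb F t" "p \<notin> ch N F r t" using parent_exists[OF T r t] by blast
    have "ch N F r t \<subseteq> nb F t - {p}" using p ch_sub_nb by blast
    then have "card (ch N F r t) \<le> card (nb F t - {p})" using fin by (intro card_mono) auto
    moreover have "0 < card (nb F t)" using p fin card_gt_0_iff by blast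
    ultimately show ?thesis using p fin cd False by (simp add: card_Diff_singleton)
  qed
qed

lemma leaves_sub: "leaves N F \<subseteq> N" by (auto simp: leaves_def)

lemma below_root: "leaves_below N F r r = leaves N F"
  using sep_end1 by (auto simp: leaves_below_sep)

lemma below_leaf:
  assumes T: "tree N F" and r: "r \<in> N" and t: "t \<in> leaves N F" "t \<noteq> r"
  shows "leaves_below N F r t = {t}"
proof -
  have "t \<in> leaves_below N F r t" using t sep_end2 by (auto simp: leaves_below_sep)
  moreover have "l = t" if l: "l \<in> leaves_below N F r t" for l
  proof (rule ccontr)
    assume lt: "l \<noteq> t"
    have lN: "l \<in> N" and sp: "sep N F r l t" using l leaves_sub by (auto simp: leaves_below_sep)
    obtain R where R: "walk N F R" "distinct R" "hd R = r" "last R = l" using tree_path[OF T r lN] by blast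
    have "t \<in> set R" using sp R unfolding sep_def by blast
    then obtain R1 R2 where Req: "R = R1 @ t # R2" by (metis split_list)
    have n1: "R1 \<noteq> []" using Req R t by auto
    have n2: "R2 \<noteq> []" using Req R lt by auto
    have e1: "{last R1, t} \<in> F" using walk_edge_mid[of N F R1 "t # R2"] R Req n1 by simp
    have w2: "walk N F (t # R2)" using walk_suffix[of N F R1 "t # R2"] R Req by simp
    have e2: "{t, hd R2} \<in> F" using w2 n2 by (cases R2) (auto simp: walk_Cons2)
    have "last R1 \<noteq> hd R2" using R(2) Req n1 n2 by (metis disjoint_iff distinct_append hd_in_set last_in_set list.set_intros(2))
    then have "2 \<le> degree F t" using two_nb[OF T, of "last R1" t "hd R2"] e1 e2
      by (auto simp: nb_def insert_commute)
    then show False using t by (auto simp: leaves_def)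
  qed
  ultimately show ?thesis by blast
qed

lemma St_split:
  assumes T: "tree N F" and r: "r \<in> N" and L: "L \<subseteq> leaves N F" and t: "t \<in> St N F L"
  shows "t \<in> L \<or> (L \<inter> leaves_below N F r t \<noteq> {} \<and> \<not> L \<subseteq> leaves_below N F r t) \<or>
    (\<exists>c\<in>ch N F r t. L \<inter> leaves_below N F r c \<noteq> {} \<and> \<not> L \<subseteq> leaves_below N F r c)"
proof -
  obtain a b where ab: "a \<in> L" "b \<in> L" "sep N F a b t" and tN: "t \<in> N" using t unfolding St_def by blast
  have aN: "a \<in> N" "b \<in> N" "a \<in> leaves N F" "b \<in> leaves N F" using ab L leaves_sub by auto
  show ?thesis
  proof (cases "t = a \<or> t = b")
    case True then show ?thesis using ab by auto
  next
    case False
    have one: "sep N F r a t \<or> sep N F r b t"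
    proof (rule ccontr)
      assume "\<not> ?thesis"
      then obtain Wa Wb where Wa: "walk N F Wa" "hd Wa = r" "last Wa = a" "t \<notin> set Wa"
        and Wb: "walk N F Wb" "hd Wb = r" "last Wb = b" "t \<notin> set Wb" unfolding sep_def by blast
      have w: "walk N F (rev Wa)" using walk_rev[OF Wa(1)] .
      have j: "last (rev Wa) = hd Wb" using Wa Wb walk_nonempty by (simp add: last_rev)
      have "walk N F (rev Wa @ tl Wb)" using walk_join[OF w Wb(1) j] .
      moreover note hl = walk_join_hd_last[OF w Wb(1) j]
      ultimately show False using ab(3) Wa Wb walk_nonempty[OF Wa(1)] unfolding sep_def
        by (metis Un_iff hd_rev set_rev)
    qed
    show ?thesis
    proof (cases "sep N F r a t \<and> sep N F r b t")
      case False
      then have "(a \<in> leaves_below N F r t \<and> b \<notin> leaves_below N F r t) \<or> (b \<in> leaves_below N F r t \<and> a \<notin> leaves_below N F r t)"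
        using one aN by (auto simp: leaves_below_sep)
      then show ?thesis using ab by blast
    next
      case True
      obtain Q where Q: "walk N F Q" "distinct Q" "hd Q = a" "last Q = b" using tree_path[OF T aN(1,2)] by blast
      have "t \<in> set Q" using ab(3) Q unfolding sep_def by blast
      then obtain Q1 Q2 where Qeq: "Q = Q1 @ t # Q2" by (metis split_list)
      have n1: "Q1 \<noteq> []" using Qeq Q False by auto
      have n2: "Q2 \<noteq> []" using Qeq Q False by auto
      define c1 where "c1 = last Q1"
      have e1: "{t, c1} \<in> F" using walk_edge_mid[of N F Q1 "t # Q2"] Q Qeq n1 by (simp add: c1_def insert_commute)
      have wQ1: "walk N F (Q1 @ [t])" using walk_prefix[of N F "Q1 @ [t]" Q2] Q Qeq by simp
      have wQ1': "walk N F Q1" using walk_prefix[OF wQ1 n1] .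
      have wQ2: "walk N F (t # Q2)" using walk_suffix[of N F Q1 "t # Q2"] Q Qeq by simp
      have tQ1: "t \<notin> set Q1" using Q Qeq by simp
      have c1Q1: "c1 \<in> set Q1" using n1 by (simp add: c1_def)
      have c1N: "c1 \<in> N" using c1Q1 wQ1' walk_set by blast
      have hdQ1: "hd Q1 = a" using Q Qeq n1 by simp
      have sep1: "sep N F r c1 t" unfolding sep_def
      proof (intro allI impI)
        fix W assume W: "walk N F W \<and> hd W = r \<and> last W = c1"
        show "t \<in> set W"
        proof (rule ccontr)
          assume tW: "t \<notin> set W"
          have wr: "walk N F (rev Q1)" using walk_rev[OF wQ1'] .
          have j: "last W = hd (rev Q1)" using W n1 by (simp add: c1_def hd_rev)
          have "walk N F (W @ tl (rev Q1))" using walk_join[OF conjunct1[OF W] wr j] .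
          moreover note hl = walk_join_hd_last[OF conjunct1[OF W] wr j]
          moreover have "last (rev Q1) = a" using hdQ1 n1 by (simp add: last_rev)
          ultimately show False using True tW tQ1 W unfolding sep_def by auto
        qed
      qed
      have c1ch: "c1 \<in> ch N F r t" using c1N e1 sep1 by (simp add: ch_def)
      have a_in: "a \<in> leaves_below N F r c1"
      proof -
        have "sep N F r a c1" unfolding sep_def
        proof (intro allI impI)
          fix W assume W: "walk N F W \<and> hd W = r \<and> last W = a"
          then have "t \<in> set W" using True unfolding sep_def by blast
          then obtain W1 W2 where Weq: "W = W1 @ t # W2" by (metis split_list)
          have wW2: "walk N F (t # W2)" using walk_suffix[of N F W1 "t # W2"] W Weq by simp
          have wP: "walk N F (t # rev Q1)" using walk_rev[OF wQ1] by simp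
          have dP: "distinct (t # rev Q1)" using Q Qeq by simp
          have "last (t # W2) = a" using W Weq by simp
          moreover have "last (t # rev Q1) = a" using hdQ1 n1 by (simp add: last_rev)
          ultimately have "set (t # rev Q1) \<subseteq> set (t # W2)"
            using path_sub_walk[OF tree_nocyc[OF T] wP dP wW2] by simp
          then show "c1 \<in> set W" using c1Q1 Weq by auto
        qed
        then show ?thesis using aN by (simp add: leaves_below_sep)
      qed
      have b_out: "b \<notin> leaves_below N F r c1"
      proof -
        obtain R where R: "walk N F R" "distinct R" "hd R = r" "last R = t" using tree_path[OF T r tN] by blast
        have c1R: "c1 \<notin> set R"
        proof
          assume "c1 \<in> set R"
          then obtain R1 R2 where Req: "R = R1 @ c1 # R2" by (metis split_list)
          have w: "walk N F (R1 @ [c1])" using walk_prefix[of N F "R1 @ [c1]" R2] R Req by simp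
          have "hd (R1 @ [c1]) = r" using R Req by (cases R1) auto
          moreover have "last (R1 @ [c1]) = c1" by simp
          ultimately have "t \<in> set (R1 @ [c1])" using sep1 w unfolding sep_def by blast
          moreover have "t \<noteq> c1" using tQ1 c1Q1 by auto
          ultimately have "t \<in> set R1" by simp
          moreover have "t \<in> set (c1 # R2)" using R Req by (metis last_appendR last_in_set list.distinct(1))
          ultimately show False using R(2) Req by auto
        qed
        have j: "last R = hd (t # Q2)" using R by simp
        have w: "walk N F (R @ tl (t # Q2))" using walk_join[OF R(1) wQ2 j] .
        note hl = walk_join_hd_last[OF R(1) wQ2 j]
        have "c1 \<notin> set (t # Q2)" using Q Qeq c1Q1 by auto
        then have "c1 \<notin> set (R @ tl (t # Q2))" using hl c1R by auto
        moreover have "last (t # Q2) = b" using Q Qeq by simp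
        ultimately have "\<not> sep N F r b c1" using w hl R unfolding sep_def by metis
        then show ?thesis by (simp add: leaves_below_sep)
      qed
      show ?thesis using c1ch a_in b_out ab by blast
    qed
  qed
qed



definition Lv :: "'a set \<Rightarrow> 'a set set \<Rightarrow> 'a \<Rightarrow> 'a gvert set" where
  "Lv X E v = (if v \<in> X then {Xv v} \<union> {Pv e v | e. e \<in> E \<and> v \<in> e} \<union> {Qv e v | e. e \<in> E \<and> v \<in> e}
     else {Yv v} \<union> {Qv e u | e u. e \<in> E \<and> u \<in> X \<and> e = {u, v}})"

context
  fixes V :: "'a set" and E :: "'a set set" and X :: "'a set"
  assumes gr: "graph V E" and XV: "X \<subseteq> V" and bip: "\<forall>e\<in>E. \<exists>u v. e = {u, v} \<and> u \<in> X \<and> v \<in> V - X"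
begin

lemma E_sub: "e \<in> E \<Longrightarrow> e \<subseteq> V" using gr by (auto simp: graph_def)

lemma Lv_sub: "v \<in> V \<Longrightarrow> Lv X E v \<subseteq> G'_V V E"
  by (auto simp: Lv_def G'_V_def)

lemma finite_E: "finite E"
proof -
  have "E \<subseteq> Pow V" using E_sub by blast
  then show ?thesis using gr by (meson finite_Pow_iff finite_subset graph_def)
qed

lemma finite_G'V: "finite (G'_V V E)"
proof -
  have fV: "finite V" using gr by (simp add: graph_def)
  have fS: "finite (SIGMA e:E. e)" using finite_E E_sub fV by (meson finite_SigmaI finite_subset)
  have "{Pv e u | e u. e \<in> E \<and> u \<in> e} \<subseteq> (\<lambda>(e,u). Pv e u) ` (SIGMA e:E. e)" by auto
  moreover have "{Qv e u | e u. e \<in> E \<and> u \<in> e} \<subseteq> (\<lambda>(e,u). Qv e u) ` (SIGMA e:E. e)" by auto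
  ultimately show ?thesis using fV fS unfolding G'_V_def by (meson finite_Un finite_imageI finite_subset)
qed

lemma G'E_sub: "G'_E V E \<subseteq> Pow (G'_V V E)"
proof
  fix h assume "h \<in> G'_E V E"
  then show "h \<in> Pow (G'_V V E)" unfolding G'_E_def
  proof (elim UnE CollectE exE conjE)
    fix e u assume "h = {Xv u, Pv e u}" "e \<in> E" "u \<in> e"
    moreover then have "u \<in> V" using E_sub by blast
    ultimately show ?thesis by (auto simp: G'_V_def)
  next
    fix e u w assume "h = {Yv w, Qv e u}" "e \<in> E" "e = {u, w}" "u \<noteq> w"
    moreover then have "u \<in> V" "w \<in> V" using E_sub by blast+
    ultimately show ?thesis by (auto simp: G'_V_def)
  qed (auto simp: G'_V_def)
qed

lemma finite_G'E: "finite (G'_E V E)"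
  using G'E_sub finite_G'V by (meson finite_Pow_iff finite_subset)

lemma LvX_elem: "u \<in> X \<Longrightarrow> z \<in> Lv X E u \<Longrightarrow> z = Xv u \<or> (\<exists>e. z = Pv e u) \<or> (\<exists>e. z = Qv e u)"
  by (auto simp: Lv_def)

lemma LvY_elem: "u \<notin> X \<Longrightarrow> z \<in> Lv X E u \<Longrightarrow> z = Yv u \<or> (\<exists>e a. z = Qv e a \<and> e = {a, u} \<and> a \<in> X)"
  by (auto simp: Lv_def)

lemma owner:
  assumes h: "h \<in> G'_E V E" and s: "u \<in> X \<longleftrightarrow> u' \<in> X"
    and h1: "h \<inter> Lv X E u \<noteq> {}" and h2: "h \<inter> Lv X E u' \<noteq> {}"
  shows "u = u'"
proof -
  obtain z1 z2 where z: "z1 \<in> h" "z1 \<in> Lv X E u" "z2 \<in> h" "z2 \<in> Lv X E u'" using h1 h2 by blast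
  have hc: "(\<exists>a b. h = {Xv a, Yv b}) \<or> (\<exists>e a. h = {Pv e a, Qv e a}) \<or> (\<exists>e a. h = {Xv a, Pv e a})
      \<or> (\<exists>e a w. h = {Yv w, Qv e a} \<and> e = {a, w} \<and> a \<noteq> w)"
    using h unfolding G'_E_def by blast
  show ?thesis
  proof (cases "u \<in> X")
    case True
    then have u'X: "u' \<in> X" using s by simp
    note e1 = LvX_elem[OF True z(2)] and e2 = LvX_elem[OF u'X z(4)]
    from hc show ?thesis
    proof (elim disjE exE conjE)
      fix a b assume "h = {Xv a, Yv b}" then show ?thesis using z e1 e2 by auto
    next
      fix e a assume "h = {Pv e a, Qv e a}" then show ?thesis using z e1 e2 by auto
    next
      fix e a assume "h = {Xv a, Pv e a}" then show ?thesis using z e1 e2 by auto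
    next
      fix e a w assume "h = {Yv w, Qv e a}" then show ?thesis using z e1 e2 by auto
    qed
  next
    case False
    then have u'X: "u' \<notin> X" using s by simp
    note e1 = LvY_elem[OF False z(2)] and e2 = LvY_elem[OF u'X z(4)]
    have dd: "u = u'" if "{a, u} = {a, u'}" "a \<in> X" for a
      using that False u'X by (auto simp: doubleton_eq_iff)
    from hc show ?thesis
    proof (elim disjE exE conjE)
      fix a b assume "h = {Xv a, Yv b}" then show ?thesis using z e1 e2 by auto
    next
      fix e a assume "h = {Pv e a, Qv e a}" then show ?thesis using z e1 e2 dd by auto
    next
      fix e a assume "h = {Xv a, Pv e a}" then show ?thesis using z e1 e2 by auto
    next
      fix e a w assume "h = {Yv w, Qv e a}" "e = {a, w}" "a \<noteq> w"
      then show ?thesis using z e1 e2 dd False u'X by (auto simp: doubleton_eq_iff)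
    qed
  qed
qed

lemma cutI:
  assumes "{a, b} \<in> G'_E V E" "a \<in> G'_V V E" "b \<in> G'_V V E" "(a \<in> A) \<noteq> (b \<in> A)"
  shows "{a, b} \<in> cut_edges (G'_V V E) (G'_E V E) A"
proof (cases "a \<in> A")
  case True
  then show ?thesis using assms unfolding cut_edges_def by blast
next
  case False
  then have "{a, b} = {b, a} \<and> b \<in> A \<and> a \<in> G'_V V E - A" using assms by (auto simp: insert_commute)
  then show ?thesis using assms unfolding cut_edges_def by blast
qed

lemma G'E_XY: "u \<in> V \<Longrightarrow> v \<in> V \<Longrightarrow> {Xv v, Yv u} \<in> G'_E V E"
  unfolding G'_E_def by (rule UnI1, rule UnI1, rule UnI1) blast
lemma G'E_PQ: "e \<in> E \<Longrightarrow> u \<in> e \<Longrightarrow> {Pv e u, Qv e u} \<in> G'_E V E"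
  unfolding G'_E_def by (rule UnI1, rule UnI1, rule UnI2) blast
lemma G'E_XP: "e \<in> E \<Longrightarrow> u \<in> e \<Longrightarrow> {Xv u, Pv e u} \<in> G'_E V E"
  unfolding G'_E_def by (rule UnI1, rule UnI2) blast
lemma G'E_YQ: "e \<in> E \<Longrightarrow> e = {u, w} \<Longrightarrow> u \<noteq> w \<Longrightarrow> {Yv w, Qv e u} \<in> G'_E V E"
  unfolding G'_E_def by (rule UnI2) blast

lemma LvX_P: "v \<in> X \<Longrightarrow> Pv e u \<in> Lv X E v \<longleftrightarrow> u = v \<and> e \<in> E \<and> v \<in> e"
  unfolding Lv_def by simp
lemma LvX_Q: "v \<in> X \<Longrightarrow> Qv e u \<in> Lv X E v \<longleftrightarrow> u = v \<and> e \<in> E \<and> v \<in> e"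
  unfolding Lv_def by simp
lemma LvY_Q: "v \<notin> X \<Longrightarrow> Qv e u \<in> Lv X E v \<longleftrightarrow> e \<in> E \<and> u \<in> X \<and> e = {u, v}"
  unfolding Lv_def by auto

lemma crossing:
  assumes v: "v \<in> V" and z1: "z1 \<in> Lv X E v \<inter> A" and z2: "z2 \<in> Lv X E v - A"
  shows "\<exists>g\<in>cut_edges (G'_V V E) (G'_E V E) A. g \<subseteq> Lv X E v"
proof -
  have sub: "Lv X E v \<subseteq> G'_V V E" using Lv_sub[OF v] .
  define hub where "hub = (if v \<in> X then Xv v else Yv v)"
  have hub: "hub \<in> Lv X E v" by (simp add: hub_def Lv_def)
  obtain z where z: "z \<in> Lv X E v" "(z \<in> A) \<noteq> (hub \<in> A)" using z1 z2 by (cases "hub \<in> A") auto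
  show ?thesis
  proof (cases "v \<in> X")
    case True
    then have hubX: "hub = Xv v" by (simp add: hub_def)
    then have "z \<noteq> Xv v" using z by auto
    then obtain e where ez: "z = Pv e v \<or> z = Qv e v" using LvX_elem[OF True z(1)] by blast
    then have e: "e \<in> E" "v \<in> e" using z(1) LvX_P[OF True] LvX_Q[OF True] by blast+
    have inL: "Xv v \<in> Lv X E v" "Pv e v \<in> Lv X E v" "Qv e v \<in> Lv X E v"
      using hub hubX e LvX_P[OF True] LvX_Q[OF True] by auto
    have E1: "{Xv v, Pv e v} \<in> G'_E V E" using e by (rule G'E_XP)
    have E2: "{Pv e v, Qv e v} \<in> G'_E V E" using e by (rule G'E_PQ)
    show ?thesis
    proof (cases "(Pv e v \<in> A) = (hub \<in> A)")
      case True
      then have "z = Qv e v" using ez z by auto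
      then have "(Pv e v \<in> A) \<noteq> (Qv e v \<in> A)" using True z by simp
      moreover have "Pv e v \<in> G'_V V E" "Qv e v \<in> G'_V V E" using inL(2,3) sub by blast+
      ultimately have c: "{Pv e v, Qv e v} \<in> cut_edges (G'_V V E) (G'_E V E) A"
        using cutI[OF E2] by simp
      have "{Pv e v, Qv e v} \<subseteq> Lv X E v" using inL(2,3) by simp
      with c show ?thesis by (rule bexI[rotated])
    next
      case False
      then have "(Xv v \<in> A) \<noteq> (Pv e v \<in> A)" using hubX by simp
      moreover have "Xv v \<in> G'_V V E" "Pv e v \<in> G'_V V E" using inL(1,2) sub by blast+
      ultimately have c: "{Xv v, Pv e v} \<in> cut_edges (G'_V V E) (G'_E V E) A"
        using cutI[OF E1] by simp
      have "{Xv v, Pv e v} \<subseteq> Lv X E v" using inL(1,2) by simp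
      with c show ?thesis by (rule bexI[rotated])
    qed
  next
    case False
    then have hubY: "hub = Yv v" by (simp add: hub_def)
    then have "z \<noteq> Yv v" using z by auto
    then obtain e u where e: "e \<in> E" "u \<in> X" "e = {u, v}" "z = Qv e u"
      using LvY_elem[OF False z(1)] LvY_Q[OF False] z(1) by blast
    have uv: "u \<noteq> v" using e False by auto
    have E1: "{Yv v, Qv e u} \<in> G'_E V E" using G'E_YQ[OF e(1) e(3) uv] .
    have "(Yv v \<in> A) \<noteq> (Qv e u \<in> A)" using z hubY e by simp
    moreover have "Yv v \<in> G'_V V E" "Qv e u \<in> G'_V V E" using hub hubY z(1) e(4) sub by auto
    ultimately have c: "{Yv v, Qv e u} \<in> cut_edges (G'_V V E) (G'_E V E) A"
      using cutI[OF E1] by simp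
    have "{Yv v, Qv e u} \<subseteq> Lv X E v" using z(1) e(4) hub hubY by simp
    with c show ?thesis by (rule bexI[rotated])
  qed
qed

lemma G'V_X: "u \<in> V \<Longrightarrow> Xv u \<in> G'_V V E" by (simp add: G'_V_def)
lemma G'V_Y: "u \<in> V \<Longrightarrow> Yv u \<in> G'_V V E" by (simp add: G'_V_def)
lemma G'V_P: "Pv e u \<in> G'_V V E \<longleftrightarrow> e \<in> E \<and> u \<in> e" by (auto simp: G'_V_def)
lemma G'V_Q: "Qv e u \<in> G'_V V E \<longleftrightarrow> e \<in> E \<and> u \<in> e" by (auto simp: G'_V_def)
lemma G'V_X': "Xv u \<in> G'_V V E \<longleftrightarrow> u \<in> V" by (auto simp: G'_V_def)
lemma G'V_Y': "Yv u \<in> G'_V V E \<longleftrightarrow> u \<in> V" by (auto simp: G'_V_def)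

definition own :: "'a gvert \<Rightarrow> 'a set" where
  "own z = (case z of Xv u \<Rightarrow> {u} | Yv u \<Rightarrow> {u} | Pv e u \<Rightarrow> {u} | Qv e u \<Rightarrow> e)"

lemma own_sub: assumes "z \<in> Lv X E v" shows "v \<in> own z"
proof (cases "v \<in> X")
  case True
  from LvX_elem[OF True assms] show ?thesis
  proof (elim disjE exE)
    fix e assume "z = Qv e v" then show ?thesis using assms LvX_Q[OF True] by (simp add: own_def)
  qed (auto simp: own_def)
next
  case False
  from LvY_elem[OF False assms] show ?thesis by (auto simp: own_def)
qed

lemma owners_card:
  assumes z: "z \<in> G'_V V E"
  shows "card {v \<in> V. z \<in> Lv X E v} \<le> 2"
proof -
  have sub: "{v \<in> V. z \<in> Lv X E v} \<subseteq> own z" using own_sub by blast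
  have "finite (own z) \<and> card (own z) \<le> 2"
  proof (cases z)
    case (Qv e u)
    then have "e \<in> E" using z G'V_Q by simp
    then obtain a b where ab: "e = {a, b}" using bip by blast
    then show ?thesis using Qv by (simp add: own_def card_insert_le_m1)
  qed (simp_all add: own_def)
  then show ?thesis using sub by (meson card_mono le_trans)
qed

lemma Lv_nonempty: "Lv X E v \<noteq> {}" by (auto simp: Lv_def)

lemma edge_common:
  assumes "e \<in> E" shows "\<exists>z u w. e = {u, w} \<and> z \<in> Lv X E u \<and> z \<in> Lv X E w"
proof -
  obtain u w where uw: "e = {u, w}" "u \<in> X" "w \<in> V - X" using bip assms by blast
  have "Qv e u \<in> Lv X E u" using uw assms by (auto simp: Lv_def)
  moreover have "Qv e u \<in> Lv X E w" using uw assms by (auto simp: Lv_def)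
  ultimately show ?thesis using uw by blast
qed

lemma has_nbr:
  assumes z: "z \<in> G'_V V E"
  shows "\<exists>z'. z' \<in> G'_V V E \<and> z' \<noteq> z \<and> {z, z'} \<in> G'_E V E"
proof (cases z)
  case (Xv u)
  then have u: "u \<in> V" using z G'V_X' by simp
  have "{Xv u, Yv u} \<in> G'_E V E" using G'E_XY[OF u u] .
  then show ?thesis using Xv u G'V_Y by blast
next
  case (Yv u)
  then have u: "u \<in> V" using z G'V_Y' by simp
  have "{Xv u, Yv u} \<in> G'_E V E" using G'E_XY[OF u u] .
  then have "{Yv u, Xv u} \<in> G'_E V E" by (simp add: insert_commute)
  then show ?thesis using Yv u G'V_X by blast
next
  case (Pv e u)
  then have eu: "e \<in> E" "u \<in> e" using z G'V_P by auto
  then have u: "u \<in> V" using E_sub by blast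
  have "{Xv u, Pv e u} \<in> G'_E V E" using G'E_XP[OF eu] .
  then have "{Pv e u, Xv u} \<in> G'_E V E" by (simp add: insert_commute)
  then show ?thesis using Pv u G'V_X by blast
next
  case (Qv e u)
  then have eu: "e \<in> E" "u \<in> e" using z G'V_Q by auto
  have "{Pv e u, Qv e u} \<in> G'_E V E" using G'E_PQ[OF eu] .
  then have "{Qv e u, Pv e u} \<in> G'_E V E" by (simp add: insert_commute)
  then show ?thesis using Qv eu G'V_P by blast
qed

lemma finite_IM: "finite {M. induced_matching_cut (G'_V V E) (G'_E V E) A M}"
proof -
  have "{M. induced_matching_cut (G'_V V E) (G'_E V E) A M} \<subseteq> Pow (G'_E V E)"
    by (auto simp: induced_matching_cut_def cut_edges_def)
  then show ?thesis using finite_G'E by (meson finite_Pow_iff finite_subset)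
qed

lemma mim_ge:
  assumes "induced_matching_cut (G'_V V E) (G'_E V E) A M"
  shows "card M \<le> mim (G'_V V E) (G'_E V E) A"
  unfolding mim_def using assms finite_IM by (intro Max_ge) auto

lemma mim_ge1:
  assumes "g \<in> cut_edges (G'_V V E) (G'_E V E) A"
  shows "1 \<le> mim (G'_V V E) (G'_E V E) A"
proof -
  have "induced_matching_cut (G'_V V E) (G'_E V E) A {g}" using assms by (simp add: induced_matching_cut_def)
  then show ?thesis using mim_ge by fastforce
qed

lemma side_bound:
  assumes S: "S \<subseteq> V" and side: "\<forall>u\<in>S. \<forall>u'\<in>S. u \<in> X \<longleftrightarrow> u' \<in> X"
    and spl: "\<forall>v\<in>S. Lv X E v \<inter> A \<noteq> {} \<and> Lv X E v - A \<noteq> {}"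
  shows "card S \<le> mim (G'_V V E) (G'_E V E) A"
proof -
  let ?C = "cut_edges (G'_V V E) (G'_E V E) A"
  have ex: "\<exists>g. g \<in> ?C \<and> g \<subseteq> Lv X E v" if v: "v \<in> S" for v
  proof -
    obtain z1 z2 where "z1 \<in> Lv X E v \<inter> A" "z2 \<in> Lv X E v - A" using spl v by blast
    from crossing[OF _ this] v S show ?thesis by blast
  qed
  define g where "g v = (SOME g. g \<in> ?C \<and> g \<subseteq> Lv X E v)" for v
  have g: "g v \<in> ?C \<and> g v \<subseteq> Lv X E v" if "v \<in> S" for v
    unfolding g_def by (rule someI_ex[OF ex[OF that]])
  have gE: "g v \<in> G'_E V E" "g v \<noteq> {}" if "v \<in> S" for v
    using g[OF that] unfolding cut_edges_def by auto
  have key: "u = u'" if u: "u \<in> S" "u' \<in> S" and h: "h \<in> G'_E V E" and hh: "h \<inter> g u \<noteq> {}" "h \<inter> g u' \<noteq> {}" for u u' h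
  proof -
    have "h \<inter> Lv X E u \<noteq> {}" using hh(1) g[OF u(1)] by blast
    moreover have "h \<inter> Lv X E u' \<noteq> {}" using hh(2) g[OF u(2)] by blast
    moreover have "u \<in> X \<longleftrightarrow> u' \<in> X" using side u by blast
    ultimately show ?thesis using owner[OF h] by blast
  qed
  have inj: "inj_on g S"
  proof (rule inj_onI)
    fix u u' assume uu: "u \<in> S" "u' \<in> S" "g u = g u'"
    have "g u \<inter> g u \<noteq> {}" using gE(2)[OF uu(1)] by simp
    then show "u = u'" using key[OF uu(1,2) gE(1)[OF uu(1)]] uu(3) by simp
  qed
  have "induced_matching_cut (G'_V V E) (G'_E V E) A (g ` S)"
    unfolding induced_matching_cut_def
  proof (intro conjI ballI impI)
    show "g ` S \<subseteq> ?C" using g by blast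
  next
    fix e f assume ef: "e \<in> g ` S" "f \<in> g ` S" "e \<noteq> f"
    then obtain u u' where uu: "u \<in> S" "u' \<in> S" "e = g u" "f = g u'" by blast
    then have ne: "u \<noteq> u'" using ef by auto
    show "e \<inter> f = {}"
    proof (rule ccontr)
      assume a: "e \<inter> f \<noteq> {}"
      have "g u \<inter> g u \<noteq> {}" using gE(2)[OF uu(1)] by simp
      moreover have "g u \<inter> g u' \<noteq> {}" using a uu by simp
      ultimately have "u = u'" using key[OF uu(1,2) gE(1)[OF uu(1)]] by simp
      then show False using ne by simp
    qed
    show "\<not> (\<exists>h\<in>?C. h \<inter> e \<noteq> {} \<and> h \<inter> f \<noteq> {})"
    proof
      assume "\<exists>h\<in>?C. h \<inter> e \<noteq> {} \<and> h \<inter> f \<noteq> {}"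
      then obtain h where h: "h \<in> ?C" "h \<inter> e \<noteq> {}" "h \<inter> f \<noteq> {}" by blast
      then have "h \<in> G'_E V E" unfolding cut_edges_def by blast
      then have "u = u'" using key[OF uu(1,2)] h(2,3) uu(3,4) by simp
      then show False using ne by simp
    qed
  qed
  then have "card (g ` S) \<le> mim (G'_V V E) (G'_E V E) A" by (rule mim_ge)
  then show ?thesis using card_image[OF inj] by simp
qed

lemma split_bound:
  "card {v \<in> V. Lv X E v \<inter> A \<noteq> {} \<and> Lv X E v - A \<noteq> {}} \<le> 2 * mim (G'_V V E) (G'_E V E) A"
proof -
  let ?S = "{v \<in> V. Lv X E v \<inter> A \<noteq> {} \<and> Lv X E v - A \<noteq> {}}"
  let ?m = "mim (G'_V V E) (G'_E V E) A"
  have a: "card (?S \<inter> X) \<le> ?m" by (rule side_bound) blast+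
  have b: "card (?S - X) \<le> ?m" by (rule side_bound) blast+
  have "card ?S \<le> card (?S \<inter> X) + card (?S - X)"
    using card_Un_le[of "?S \<inter> X" "?S - X"] by (simp only: Int_Diff_Un)
  then show ?thesis using a b by linarith
qed

end


lemma walk_mono: "walk N F xs \<Longrightarrow> N \<subseteq> N' \<Longrightarrow> F \<subseteq> F' \<Longrightarrow> walk N' F' xs"
  unfolding walk_def by blast

lemma cyc_adj:
  assumes w: "walk N F xs" and c: "{last xs, hd xs} \<in> F" and j: "j < length xs"
  shows "{xs ! j, xs ! (Suc j mod length xs)} \<in> F"
proof (cases "Suc j < length xs")
  case True then show ?thesis using w unfolding walk_def by simp
next
  case False
  then have "Suc j = length xs" using j by simp
  moreover have "xs \<noteq> []" using j by auto
  moreover have "j = length xs - 1" using \<open>Suc j = length xs\<close> by simp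
  ultimately show ?thesis using c by (simp add: last_conv_nth hd_conv_nth insert_commute)
qed

lemma pendant_tree:
  assumes T: "tree N F" and l: "l \<in> N" and a: "a \<notin> N"
  shows "tree (insert a N) (insert {l, a} F)"
proof -
  let ?N = "insert a N" and ?F = "insert {l, a} F"
  have al: "a \<noteq> l" using a l by auto
  have gr: "graph ?N ?F" using T al l unfolding tree_def graph_def by blast
  have Fa: "\<forall>e\<in>F. a \<notin> e" using tree_edge[OF T] a by blast
  have conn: "connected_graph ?N ?F" unfolding connected_graph_def
  proof (intro ballI)
    have toa: "\<exists>xs. walk ?N ?F xs \<and> hd xs = a \<and> last xs = y" if y: "y \<in> ?N" for y
    proof (cases "y = a")
      case True then show ?thesis by (intro exI[of _ "[a]"]) simp
    next
      case False
      then have "y \<in> N" using y by simp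
      then obtain W where W: "walk N F W" "hd W = l" "last W = y" using T l unfolding tree_def connected_graph_def by blast
      have W': "walk ?N ?F W" using walk_mono[OF W(1)] by blast
      have "walk ?N ?F (a # W)" using W' W(2) walk_nonempty[OF W(1)] by (simp add: walk_Cons insert_commute)
      then show ?thesis using W walk_nonempty[OF W(1)] by (intro exI[of _ "a # W"]) simp
    qed
    fix x y assume x: "x \<in> ?N" and y: "y \<in> ?N"
    show "\<exists>xs. walk ?N ?F xs \<and> hd xs = x \<and> last xs = y"
    proof (cases "x = a \<or> y = a")
      case True
      then show ?thesis
      proof
        assume "x = a" then show ?thesis using toa[OF y] by simp
      next
        assume ya: "y = a"
        obtain W where W: "walk ?N ?F W" "hd W = a" "last W = x" using toa[OF x] by blast
        have "walk ?N ?F (rev W)" using walk_rev[OF W(1)] .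
        then show ?thesis using W ya walk_nonempty[OF W(1)] by (intro exI[of _ "rev W"]) (simp add: hd_rev last_rev)
      qed
    next
      case False
      then have "x \<in> N" "y \<in> N" using x y by auto
      then obtain W where W: "walk N F W" "hd W = x" "last W = y" using T unfolding tree_def connected_graph_def by blast
      then show ?thesis using walk_mono[OF W(1)] by blast
    qed
  qed
  have nocyc: "\<not> has_cycle ?N ?F"
  proof
    assume "has_cycle ?N ?F"
    then obtain xs where xs: "walk ?N ?F xs" "distinct xs" "3 \<le> length xs" "{last xs, hd xs} \<in> ?F"
      unfolding has_cycle_def by blast
    show False
    proof (cases "a \<in> set xs")
      case False
      have "walk N F xs" unfolding walk_def
      proof (intro conjI allI impI)
        show "xs \<noteq> []" using xs(3) by auto
        show "set xs \<subseteq> N" using xs(1) False walk_set by blast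
        fix i assume i: "Suc i < length xs"
        then have "{xs ! i, xs ! Suc i} \<in> ?F" using xs(1) unfolding walk_def by blast
        moreover have "xs ! Suc i \<noteq> a" using False i by (metis Suc_lessD nth_mem)
        moreover have "xs ! i \<noteq> a" using False i by (metis Suc_lessD nth_mem)
        ultimately show "{xs ! i, xs ! Suc i} \<in> F" by (auto simp: doubleton_eq_iff)
      qed
      moreover have "{last xs, hd xs} \<in> F"
      proof -
        have "last xs \<noteq> a" "hd xs \<noteq> a" using False xs(3) by (metis last_in_set list.size(3) not_numeral_le_zero,
            metis hd_in_set list.size(3) not_numeral_le_zero)
        then show ?thesis using xs(4) by (auto simp: doubleton_eq_iff)
      qed
      ultimately have "has_cycle N F" using xs unfolding has_cycle_def by blast
      then show False using T by (simp add: tree_def)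
    next
      case True
      then obtain i where i: "i < length xs" "xs ! i = a" by (metis in_set_conv_nth)
      let ?n = "length xs"
      have nb: "x = l" if "{a, x} \<in> ?F \<or> {x, a} \<in> ?F" for x
        using that Fa by (auto simp: doubleton_eq_iff)
      define j where "j = (i + ?n - 1) mod ?n"
      have j: "j < ?n" using xs(3) unfolding j_def by (intro mod_less_divisor) linarith
      have sj: "Suc j mod ?n = i"
      proof -
        have "Suc j mod ?n = (Suc (i + ?n - 1)) mod ?n" unfolding j_def by (simp add: mod_Suc_eq)
        also have "Suc (i + ?n - 1) = i + ?n" using xs(3) by simp
        finally show ?thesis using i by simp
      qed
      have e1: "{xs ! j, a} \<in> ?F" using cyc_adj[OF xs(1) xs(4) j] sj i by simp
      have e2: "{a, xs ! (Suc i mod ?n)} \<in> ?F" using cyc_adj[OF xs(1) xs(4) i(1)] i by simp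
      have "xs ! j = l" "xs ! (Suc i mod ?n) = l" using nb e1 e2 by auto
      moreover have "j \<noteq> Suc i mod ?n"
      proof (cases "i = 0")
        case True
        have n1: "?n - 1 < ?n" "1 < ?n" using xs(3) by linarith+
        have "j = (?n - 1) mod ?n" using True by (simp add: j_def)
        also have "\<dots> = ?n - 1" using n1(1) by (rule mod_less)
        finally have "j = ?n - 1" .
        moreover have "Suc i mod ?n = 1" using True n1(2) by (simp add: mod_less)
        ultimately show ?thesis using xs(3) by linarith
      next
        case False
        have "i + ?n - 1 = (i - 1) + ?n" using False by linarith
        then have "j = (i - 1 + ?n) mod ?n" by (simp add: j_def)
        also have "\<dots> = (i - 1) mod ?n" by (rule mod_add_self2)
        also have "\<dots> = i - 1" using i(1) by (intro mod_less) linarith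
        finally have jj: "j = i - 1" .
        show ?thesis
        proof (cases "Suc i < ?n")
          case True
          then have "Suc i mod ?n = Suc i" by (rule mod_less)
          then show ?thesis using jj by linarith
        next
          case False
          then have si: "Suc i = ?n" using i(1) by linarith
          then have "Suc i mod ?n = 0" by simp
          then show ?thesis using jj si xs(3) by linarith
        qed
      qed
      moreover have "Suc i mod ?n < ?n" using xs(3) by (intro mod_less_divisor) linarith
      ultimately show False using xs(2) j by (metis nth_eq_iff_index_eq)
    qed
  qed
  show ?thesis using gr conn nocyc unfolding tree_def by blast
qed



lemma degree_insert_edge:
  assumes "finite F" "e \<notin> F"
  shows "degree (insert e F) t = degree F t + (if t \<in> e then 1 else 0)"
proof (cases "t \<in> e")
  case True
  then have "{x \<in> insert e F. t \<in> x} = insert e {x \<in> F. t \<in> x}" by auto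
  then show ?thesis using assms True by (simp add: degree_def)
next
  case False
  then have "{x \<in> insert e F. t \<in> x} = {x \<in> F. t \<in> x}" by auto
  then show ?thesis using False by (simp add: degree_def)
qed

lemma degree_outside: "tree N F \<Longrightarrow> t \<notin> N \<Longrightarrow> degree F t = 0"
proof -
  assume T: "tree N F" "t \<notin> N"
  have "{x \<in> F. t \<in> x} = {}" using tree_edge[OF T(1)] T(2) by blast
  then show ?thesis unfolding degree_def by (metis card.empty)
qed

lemma tree_single: "tree {x} {}"
proof -
  have "graph {x} {}" by (simp add: graph_def)
  moreover have "connected_graph {x} {}" unfolding connected_graph_def
    by (intro ballI exI[of _ "[x]"]) simp
  moreover have "\<not> has_cycle {x} {}"
  proof
    assume "has_cycle {x} {}"
    then obtain xs where xs: "walk {x} {} xs" "distinct xs" "3 \<le> length xs" unfolding has_cycle_def by blast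
    have "card (set xs) \<le> card {x}" using walk_set[OF xs(1)] by (intro card_mono) auto
    then show False using xs distinct_card by fastforce
  qed
  ultimately show ?thesis by (simp add: tree_def)
qed

lemma bd_exists:
  assumes "finite S" "S \<noteq> {}"
  shows "\<exists>N F (\<delta>::nat \<Rightarrow> 'b). tree N F \<and> (\<forall>t\<in>N. degree F t \<le> 3) \<and> bij_betw \<delta> (leaves N F) S"
  using assms
proof (induction S rule: finite_ne_induct)
  case (singleton s)
  have "leaves {0} {} = {0::nat}" by (simp add: leaves_def degree_def)
  then show ?case using tree_single[of 0]
    by (intro exI[of _ "{0::nat}"] exI[of _ "{}"] exI[of _ "\<lambda>_. s"]) (simp add: degree_def bij_betw_def)
next
  case (insert s S)
  then obtain N F and \<delta> :: "nat \<Rightarrow> 'b" where T: "tree N F" and D: "\<forall>t\<in>N. degree F t \<le> 3"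
    and B: "bij_betw \<delta> (leaves N F) S" by blast
  have "leaves N F \<noteq> {}" using B insert.hyps(2) by (auto simp: bij_betw_def)
  then obtain l where l: "l \<in> leaves N F" by blast
  have lN: "l \<in> N" using l leaves_sub by blast
  have fN: "finite N" using tree_finite[OF T] .
  define a where "a = Suc (Max N)"
  define b where "b = Suc a"
  have aN: "a \<notin> N"
  proof
    assume "a \<in> N" then have "a \<le> Max N" by (rule Max_ge[OF fN])
    then show False by (simp add: a_def)
  qed
  have bN: "b \<notin> N"
  proof
    assume "b \<in> N" then have "b \<le> Max N" by (rule Max_ge[OF fN])
    then show False by (simp add: a_def b_def)
  qed
  have ab: "a \<noteq> b" "a \<noteq> l" "b \<noteq> l" using aN bN lN b_def by auto
  let ?N1 = "insert a N" let ?F1 = "insert {l, a} F"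
  let ?N2 = "insert b ?N1" let ?F2 = "insert {l, b} ?F1"
  have T1: "tree ?N1 ?F1" using pendant_tree[OF T lN aN] .
  have T2: "tree ?N2 ?F2" using pendant_tree[OF T1] lN bN ab by simp
  have fF: "finite F" using tree_finiteF[OF T] .
  have nF: "{l, x} \<notin> F" if "x \<notin> N" for x
  proof
    assume "{l, x} \<in> F"
    then obtain u v where uv: "{l, x} = {u, v}" "u \<in> N" "v \<in> N" using tree_edge[OF T] by metis
    have "x \<in> {u, v}" using uv(1) by (metis insertI1 insert_commute)
    then show False using uv that by auto
  qed
  have n1: "{l, a} \<notin> F" using nF aN .
  have n2: "{l, b} \<notin> ?F1" using nF[OF bN] ab by (auto simp: doubleton_eq_iff)
  have deg: "degree ?F2 t = degree F t + (if t \<in> {l, a} then 1 else 0) + (if t \<in> {l, b} then 1 else 0)" for t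
    using degree_insert_edge[OF finite_insert[THEN iffD2, OF fF] n2] degree_insert_edge[OF fF n1] by simp
  have da: "degree F a = 0" "degree F b = 0" using degree_outside[OF T] aN bN by auto
  have dl: "degree F l \<le> 1" using l by (simp add: leaves_def)
  have D2: "\<forall>t\<in>?N2. degree ?F2 t \<le> 3"
  proof
    fix t assume t: "t \<in> ?N2"
    show "degree ?F2 t \<le> 3"
    proof (cases "t \<in> {a, b, l}")
      case True then show ?thesis using deg[of t] da dl ab by auto
    next
      case False then show ?thesis using deg[of t] D t by auto
    qed
  qed
  have lv: "leaves ?N2 ?F2 = insert a (insert b (leaves N F - {l}))"
  proof -
    have "t \<in> leaves ?N2 ?F2 \<longleftrightarrow> t \<in> insert a (insert b (leaves N F - {l}))" for t
    proof (cases "t \<in> {a, b, l}")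
      case True then show ?thesis using deg[of t] da dl ab lN by (auto simp: leaves_def)
    next
      case False then show ?thesis using deg[of t] by (auto simp: leaves_def)
    qed
    then show ?thesis by blast
  qed
  define \<delta>2 where "\<delta>2 = \<delta>(a := \<delta> l, b := s)"
  have inj: "inj_on \<delta> (leaves N F)" and img: "\<delta> ` leaves N F = S" using B by (auto simp: bij_betw_def)
  have aL: "a \<notin> leaves N F" "b \<notin> leaves N F" using aN bN leaves_sub by auto
  have img2: "\<delta>2 ` (leaves N F - {l}) = S - {\<delta> l}"
  proof -
    have "\<delta>2 ` (leaves N F - {l}) = \<delta> ` (leaves N F - {l})" using aL by (auto simp: \<delta>2_def)
    also have "\<dots> = S - {\<delta> l}" using inj img l by (simp add: inj_on_image_set_diff)
    finally show ?thesis .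
  qed
  have inj2: "inj_on \<delta>2 (leaves N F - {l})"
  proof -
    have i1: "inj_on \<delta> (leaves N F - {l})" using inj by (rule inj_on_subset) blast
    have "\<And>x. x\<in>leaves N F - {l} \<Longrightarrow> \<delta>2 x = \<delta> x" using aL unfolding \<delta>2_def by auto
    then have "inj_on \<delta>2 (leaves N F - {l}) = inj_on \<delta> (leaves N F - {l})" by (rule inj_on_cong) simp
    then show ?thesis using i1 by simp
  qed
  have sS: "s \<notin> S" using insert.hyps by simp
  have dlS: "\<delta> l \<in> S" using img l by blast
  have "bij_betw \<delta>2 (insert a (insert b (leaves N F - {l}))) (insert s S)"
    unfolding bij_betw_def
  proof
    have vb: "\<delta>2 b = s" and va: "\<delta>2 a = \<delta> l" using ab by (auto simp: \<delta>2_def)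
    show "inj_on \<delta>2 (insert a (insert b (leaves N F - {l})))"
    proof -
      have "\<delta>2 ` (leaves N F - {l} - {b}) \<subseteq> S" using img2 by auto
      then have "\<delta>2 b \<notin> \<delta>2 ` (leaves N F - {l} - {b})" using vb sS by blast
      then have "inj_on \<delta>2 (insert b (leaves N F - {l}))"
        using inj2 by (simp only: inj_on_insert) simp
      moreover have "\<delta>2 a \<notin> \<delta>2 ` (insert b (leaves N F - {l}) - {a})"
        using img2 va vb dlS sS aL ab by (auto)
      ultimately show ?thesis by (simp add: inj_on_insert)
    qed
    show "\<delta>2 ` insert a (insert b (leaves N F - {l})) = insert s S"
      using img2 va vb dlS by auto
  qed
  then have "bij_betw \<delta>2 (leaves ?N2 ?F2) (insert s S)" using lv by simp
  then show ?case using T2 D2 by blast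
qed



lemma St_mem: "l \<in> L \<Longrightarrow> l \<in> N \<Longrightarrow> l \<in> St N F L"
  unfolding St_def using sep_end1[of N F l l] by blast

lemma tw_le: "tree_decomposition V E N F \<beta> \<Longrightarrow> treewidth V E \<le> td_width N \<beta>"
  unfolding treewidth_def by (rule cInf_lower) auto

lemma tw_empty:
  assumes "graph {} E" shows "treewidth {} E \<le> 0"
proof -
  have E: "E = {}" using assms by (auto simp: graph_def)
  have "tree_decomposition {} E {0} {} (\<lambda>_. {})"
    unfolding tree_decomposition_def using tree_single E by simp
  moreover have "td_width {0::nat} (\<lambda>_. {} :: 'a set) = 0" by (simp add: td_width_def)
  ultimately show ?thesis using tw_le by fastforce
qed

theorem lemma12:
  fixes V :: "'a set" and E :: "'a set set"
  assumes "graph V E" and "bipartite V E"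
  shows "treewidth V E \<le> 6 * mimw (G'_V V E) (G'_E V E)"
proof (cases "V = {}")
  case True
  then show ?thesis using tw_empty assms(1) by fastforce
next
  case Vne: False
  obtain X where XV: "X \<subseteq> V" and bip: "\<forall>e\<in>E. \<exists>u v. e = {u, v} \<and> u \<in> X \<and> v \<in> V - X"
    using assms(2) unfolding bipartite_def by blast
  note gr = assms(1)
  let ?GV = "G'_V V E" and ?GE = "G'_E V E"
  obtain v0 where v0: "v0 \<in> V" using Vne by blast
  have GVne: "?GV \<noteq> {}" using v0 by (auto simp: G'_V_def)
  have fGV: "finite ?GV" using finite_G'V[OF gr XV bip] .
  define K where "K = {k. \<exists>N F \<delta> r. branch_decomposition ?GV ?GE N F \<delta> \<and> r \<in> N \<and> k = bd_mimw ?GV ?GE N F \<delta> r}"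
  have "K \<noteq> {}"
  proof -
    obtain N F and \<delta> :: "nat \<Rightarrow> 'a gvert" where "tree N F" "\<forall>t\<in>N. degree F t \<le> 3" "bij_betw \<delta> (leaves N F) ?GV"
      using bd_exists[OF fGV GVne] by blast
    moreover then obtain r where "r \<in> N" unfolding tree_def by blast
    ultimately show ?thesis unfolding K_def branch_decomposition_def by blast
  qed
  then have "mimw ?GV ?GE \<in> K" unfolding mimw_def K_def[symmetric] by (rule Inf_nat_def1)
  then obtain N F \<delta> r where BD: "branch_decomposition ?GV ?GE N F \<delta>" and r: "r \<in> N"
    and kdef: "mimw ?GV ?GE = bd_mimw ?GV ?GE N F \<delta> r" unfolding K_def by blast
  define k where "k = mimw ?GV ?GE"
  have T: "tree N F" and D3: "\<forall>t\<in>N. degree F t \<le> 3" and B: "bij_betw \<delta> (leaves N F) ?GV"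
    using BD unfolding branch_decomposition_def by auto
  have fN: "finite N" using tree_finite[OF T] .
  have injd: "inj_on \<delta> (leaves N F)" and imgd: "\<delta> ` leaves N F = ?GV" using B by (auto simp: bij_betw_def)
  define below where "below s = leaves_below N F r s" for s
  define A where "A s = \<delta> ` below s" for s
  have below_sub: "below s \<subseteq> leaves N F" for s by (auto simp: below_def leaves_below_def)
  have kb: "mim ?GV ?GE (A s) \<le> k" if "s \<in> N" for s
  proof -
    have "mim ?GV ?GE (A s) \<in> (\<lambda>t. mim ?GV ?GE (\<delta> ` leaves_below N F r t)) ` N"
      using that by (simp add: A_def below_def)
    then show ?thesis unfolding k_def kdef bd_mimw_def using fN by (intro Max_ge) auto
  qed
  define L where "L v = {l \<in> leaves N F. \<delta> l \<in> Lv X E v}" for v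
  have L_sub: "L v \<subseteq> leaves N F" for v by (auto simp: L_def)
  have L_subN: "L v \<subseteq> N" for v using L_sub leaves_sub by blast
  define \<beta> where "\<beta> t = {v \<in> V. t \<in> St N F (L v)}" for t
  define spl where "spl s = {v \<in> V. L v \<inter> below s \<noteq> {} \<and> \<not> L v \<subseteq> below s}" for s
  have spl_card: "card (spl s) \<le> 2 * k" if s: "s \<in> N" for s
  proof -
    have "spl s \<subseteq> {v \<in> V. Lv X E v \<inter> A s \<noteq> {} \<and> Lv X E v - A s \<noteq> {}}"
    proof
      fix v assume v: "v \<in> spl s"
      then obtain l l' where l: "l \<in> L v" "l \<in> below s" and l': "l' \<in> L v" "l' \<notin> below s"
        unfolding spl_def by blast
      have "\<delta> l \<in> Lv X E v \<inter> A s" using l by (auto simp: L_def A_def)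
      moreover have "\<delta> l' \<notin> A s"
      proof
        assume "\<delta> l' \<in> A s"
        then obtain m where m: "m \<in> below s" "\<delta> m = \<delta> l'" unfolding A_def by (metis imageE)
        have "m = l'" using injd m below_sub l'(1) L_sub by (meson inj_onD subsetD)
        then show False using m l' by simp
      qed
      moreover have "\<delta> l' \<in> Lv X E v" using l' by (simp add: L_def)
      ultimately show "v \<in> {v \<in> V. Lv X E v \<inter> A s \<noteq> {} \<and> Lv X E v - A s \<noteq> {}}"
        using v unfolding spl_def by blast
    qed
    moreover have "finite V" using gr by (simp add: graph_def)
    ultimately have "card (spl s) \<le> card {v \<in> V. Lv X E v \<inter> A s \<noteq> {} \<and> Lv X E v - A s \<noteq> {}}"
      by (intro card_mono) auto
    also have "\<dots> \<le> 2 * mim ?GV ?GE (A s)" by (rule split_bound[OF gr XV bip])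
    also have "\<dots> \<le> 2 * k" using kb[OF s] by simp
    finally show ?thesis .
  qed
  have k1: "1 \<le> k"
  proof -
    have "Xv v0 \<in> ?GV" "Yv v0 \<in> ?GV" using v0 by (auto simp: G'_V_def)
    then obtain l1 l2 where "l1 \<in> leaves N F" "l2 \<in> leaves N F" "\<delta> l1 = Xv v0" "\<delta> l2 = Yv v0"
      using imgd by (metis imageE)
    then obtain t where t: "t \<in> leaves N F" "t \<noteq> r" by (metis gvert.distinct(1))
    have tN: "t \<in> N" using t leaves_sub by blast
    have bt: "below t = {t}" unfolding below_def using below_leaf[OF T r t] .
    have dt: "\<delta> t \<in> ?GV" using t imgd by blast
    obtain z' where z': "z' \<in> ?GV" "z' \<noteq> \<delta> t" "{\<delta> t, z'} \<in> ?GE" using has_nbr[OF gr XV bip dt] by blast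
    have At: "A t = {\<delta> t}" using bt by (simp add: A_def)
    have "{\<delta> t, z'} \<in> cut_edges ?GV ?GE (A t)"
      using cutI[OF gr XV bip z'(3) dt z'(1)] z'(2) At by simp
    then have "1 \<le> mim ?GV ?GE (A t)" by (rule mim_ge1[OF gr XV bip])
    then show ?thesis using kb[OF tN] by simp
  qed
  have bag_card: "card (\<beta> t) \<le> 6 * k + 1" if t: "t \<in> N" for t
  proof -
    define Ow where "Ow = {v \<in> V. t \<in> L v}"
    define P where "P = (if t = r then {} else spl t)"
    have sub: "\<beta> t \<subseteq> Ow \<union> P \<union> (\<Union>c\<in>ch N F r t. spl c)"
    proof
      fix v assume v: "v \<in> \<beta> t"
      then have vV: "v \<in> V" and tS: "t \<in> St N F (L v)" by (auto simp: \<beta>_def)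
      from St_split[OF T r L_sub tS] show "v \<in> Ow \<union> P \<union> (\<Union>c\<in>ch N F r t. spl c)"
      proof (elim disjE)
        assume "t \<in> L v" then show ?thesis using vV by (simp add: Ow_def)
      next
        assume a: "L v \<inter> leaves_below N F r t \<noteq> {} \<and> \<not> L v \<subseteq> leaves_below N F r t"
        then have "t \<noteq> r" using L_sub[of v] below_root[of N F r] by auto
        then show ?thesis using a vV by (simp add: P_def spl_def below_def)
      next
        assume "\<exists>c\<in>ch N F r t. L v \<inter> leaves_below N F r c \<noteq> {} \<and> \<not> L v \<subseteq> leaves_below N F r c"
        then show ?thesis using vV by (auto simp: spl_def below_def)
      qed
    qed
    have fV: "finite V" using gr by (simp add: graph_def)
    have fch: "finite (ch N F r t)" using fN by (simp add: ch_def)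
    have chN: "ch N F r t \<subseteq> N" by (auto simp: ch_def)
    have cO: "card Ow \<le> (if t \<in> leaves N F then 2 else 0)"
    proof (cases "t \<in> leaves N F")
      case True
      then have "Ow = {v \<in> V. \<delta> t \<in> Lv X E v}" by (auto simp: Ow_def L_def)
      moreover have "\<delta> t \<in> ?GV" using True imgd by blast
      ultimately show ?thesis using owners_card[OF gr XV bip] True by simp
    next
      case False
      then have "Ow = {}" using L_sub by (auto simp: Ow_def)
      then show ?thesis by simp
    qed
    have cP: "card P \<le> (if t = r then 0 else 1) * (2 * k)" using spl_card[OF t] by (simp add: P_def)
    have cU: "card (\<Union>c\<in>ch N F r t. spl c) \<le> card (ch N F r t) * (2 * k)"
    proof -
      have "card (\<Union>c\<in>ch N F r t. spl c) \<le> (\<Sum>c\<in>ch N F r t. card (spl c))" by (rule card_UN_le[OF fch])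
      also have "\<dots> \<le> card (ch N F r t) * (2 * k)"
        using spl_card chN by (intro sum_bounded_above[of _ _ "2 * k", simplified]) auto
      finally show ?thesis .
    qed
    have fOw: "finite Ow" "finite P" using fV by (auto simp: Ow_def P_def spl_def)
    have "card (\<beta> t) \<le> card (Ow \<union> P \<union> (\<Union>c\<in>ch N F r t. spl c))"
      using sub fOw fch fV by (intro card_mono) (auto simp: spl_def)
    also have "\<dots> \<le> card Ow + card P + card (\<Union>c\<in>ch N F r t. spl c)"
      by (meson add_le_mono card_Un_le le_refl order_trans)
    finally have c1: "card (\<beta> t) \<le> card Ow + card P + card (\<Union>c\<in>ch N F r t. spl c)" .
    have chc: "card (ch N F r t) + (if t = r then 0 else 1) \<le> degree F t" using ch_card[OF T r t] .
    have d3: "degree F t \<le> 3" using D3 t by blast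
    show ?thesis
    proof (cases "t \<in> leaves N F")
      case True
      then have "degree F t \<le> 1" by (simp add: leaves_def)
      then have "card (ch N F r t) + (if t = r then 0 else 1) \<le> 1" using chc by simp
      then have "(if t = r then 0 else 1) * (2 * k) + card (ch N F r t) * (2 * k) \<le> 1 * (2 * k)"
        by (metis add_mult_distrib mult_le_mono1 add.commute)
      then show ?thesis using c1 cO cP cU True k1 by simp
    next
      case False
      then have "(if t = r then 0 else 1) * (2 * k) + card (ch N F r t) * (2 * k) \<le> 3 * (2 * k)"
        using chc d3 by (metis add_mult_distrib mult_le_mono1 add.commute le_trans)
      then show ?thesis using c1 cO cP cU False by simp
    qed
  qed
  have St_N: "St N F M \<subseteq> N" for M by (auto simp: St_def)
  have TD: "tree_decomposition V E N F \<beta>"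
    unfolding tree_decomposition_def
  proof (intro conjI ballI)
    show "tree N F" by (rule T)
  next
    fix t assume "t \<in> N" then show "\<beta> t \<subseteq> V" by (auto simp: \<beta>_def)
  next
    fix v assume v: "v \<in> V"
    obtain z where z: "z \<in> Lv X E v" using Lv_nonempty[OF gr XV bip, of v] by blast
    then have "z \<in> ?GV" using Lv_sub[OF gr XV bip v] by blast
    then have "z \<in> \<delta> ` leaves N F" using imgd by simp
    then obtain l where l: "l \<in> leaves N F" "\<delta> l = z" by (rule imageE) simp
    then have "l \<in> L v" "l \<in> N" using z leaves_sub by (auto simp: L_def)
    then have "l \<in> St N F (L v)" by (rule St_mem)
    then show "\<exists>t\<in>N. v \<in> \<beta> t" using v \<open>l \<in> N\<close> by (auto simp: \<beta>_def)
  next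
    fix e assume e: "e \<in> E"
    obtain z u w where zuw: "e = {u, w}" "z \<in> Lv X E u" "z \<in> Lv X E w" using edge_common[OF gr XV bip e] by blast
    have uw: "u \<in> V" "w \<in> V" using E_sub[OF gr XV bip e] zuw(1) by auto
    then have "z \<in> ?GV" using Lv_sub[OF gr XV bip] zuw by blast
    then have "z \<in> \<delta> ` leaves N F" using imgd by simp
    then obtain l where l: "l \<in> leaves N F" "\<delta> l = z" by (rule imageE) simp
    then have lN: "l \<in> N" using leaves_sub by blast
    have "l \<in> L u" "l \<in> L w" using l zuw by (auto simp: L_def)
    then have "l \<in> St N F (L u)" "l \<in> St N F (L w)" using lN by (simp_all add: St_mem)
    then have "e \<subseteq> \<beta> l" using uw zuw(1) by (auto simp: \<beta>_def)
    then show "\<exists>t\<in>N. e \<subseteq> \<beta> t" using lN by blast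
  next
    fix v assume v: "v \<in> V"
    have e1: "{t \<in> N. v \<in> \<beta> t} = St N F (L v)" using v St_N by (auto simp: \<beta>_def)
    have e2: "{f \<in> F. \<forall>t\<in>f. v \<in> \<beta> t} = {f \<in> F. \<forall>t\<in>f. t \<in> St N F (L v)}"
      using v by (auto simp: \<beta>_def)
    show "connected_graph {t \<in> N. v \<in> \<beta> t} {f \<in> F. \<forall>t\<in>f. v \<in> \<beta> t}"
      unfolding e1 e2 by (rule St_connected[OF T L_subN])
  qed
  have "td_width N \<beta> \<le> 6 * k"
  proof -
    have "N \<noteq> {}" using r by blast
    then have "Max ((\<lambda>t. card (\<beta> t)) ` N) \<le> 6 * k + 1"
      using fN bag_card by (subst Max_le_iff) auto
    then show ?thesis by (simp add: td_width_def)
  qed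
  then show ?thesis using tw_le[OF TD] by (simp add: k_def)
qed


end
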